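(* Let $\mathcal{Y}=\{y_1,\dots,y_{n+1}\}\subset\mathbb{R}^n$ be affinely independent and $y_0\in\mathbb{R}^n$. Then the matrix $G=\sum_{i=0}^{n+1}\ell_iy_iy_i^T$ has exactly $|\mathcal{I}_+|-1$ positive eigenvalues and exactly $|\mathcal{I}_-|-1$ negative eigenvalues (counted with multiplicity).
   Context: The barycentric coordinates of $y_0\in\mathbb{R}^n$ with respect to the affinely independent set $\mathcal{Y}$ are the unique reals $\ell_1,\dots,\ell_{n+1}$ with $\sum_{i=1}^{n+1}\ell_i=1$ and $\sum_{i=1}^{n+1}\ell_iy_i=y_0$; set $\ell_0=-1$. Define $\mathcal{I}_+=\{i\in\{0,1,\dots,n+1\}:\ell_i>0\}$ and $\mathcal{I}_-=\{i\in\{0,1,\dots,n+1\}:\ell_i<0\}$ (so $0\in\mathcal{I}_-$). *)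

theory Defs
  imports "Jordan_Normal_Form.Jordan_Normal_Form"
begin

definition affinely_independent :: "nat \<Rightarrow> (nat \<Rightarrow> real vec) \<Rightarrow> nat set \<Rightarrow> bool" where
  "affinely_independent n y I \<longleftrightarrow>
     (\<forall>c :: nat \<Rightarrow> real.
        (\<Sum>i\<in>I. c i) = 0 \<and> (\<forall>a<n. (\<Sum>i\<in>I. c i * y i $ a) = 0) \<longrightarrow> (\<forall>i\<in>I. c i = 0))"

definition num_pos_eigenvalues :: "real mat \<Rightarrow> nat" where
  "num_pos_eigenvalues A = (\<Sum>x\<in>{x. x > 0 \<and> eigenvalue A x}. order x (char_poly A))"

definition num_neg_eigenvalues :: "real mat \<Rightarrow> nat" where
  "num_neg_eigenvalues A = (\<Sum>x\<in>{x. x < 0 \<and> eigenvalue A x}. order x (char_poly A))"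

end

theory Submission
  imports Defs
begin

lemma real_sym_eigenvalue:
  fixes A :: "real mat"
  assumes A: "A \<in> carrier_mat n n" and sym: "transpose_mat A = A" and n: "n > 0"
  shows "\<exists>e. eigenvalue A e"
proof -
  let ?C = "map_mat complex_of_real A"
  have C: "?C \<in> carrier_mat n n" using A by auto
  have cp: "char_poly ?C = map_poly complex_of_real (char_poly A)" by (rule of_real_hom.char_poly_hom[OF A])
  have "degree (char_poly ?C) = n" using degree_monic_char_poly[OF C] by simp
  then have "\<not> constant (poly (char_poly ?C))" using n by (simp add: constant_degree)
  then obtain z where z: "poly (char_poly ?C) z = 0" using fundamental_theorem_of_algebra by blast
  then have "eigenvalue ?C z" using eigenvalue_root_char_poly[OF C] by simp
  then obtain v where v: "v \<in> carrier_vec n" "v \<noteq> 0\<^sub>v n" "?C *\<^sub>v v = z \<cdot>\<^sub>v v"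
    unfolding eigenvalue_def eigenvector_def using C by auto
  define s where "s = (\<Sum>i<n. \<Sum>j<n. cnj (v$i) * complex_of_real (A$$(i,j)) * v$j)"
  define N where "N = (\<Sum>i<n. cnj (v$i) * v$i)"
  have Cv: "(?C *\<^sub>v v) $ i = (\<Sum>j<n. complex_of_real (A$$(i,j)) * v$j)" if "i<n" for i
    using that A v(1) by (auto simp: scalar_prod_def lessThan_atLeast0)
  have "s = (\<Sum>i<n. cnj (v$i) * (?C *\<^sub>v v) $ i)"
    unfolding s_def by (simp add: Cv sum_distrib_left mult.assoc)
  also have "\<dots> = z * N" unfolding N_def v(3) using v(1)
    by (simp add: sum_distrib_left mult_ac)
  finally have sz: "s = z * N" .
  have "cnj s = (\<Sum>i<n. \<Sum>j<n. v$i * complex_of_real (A$$(i,j)) * cnj (v$j))"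
    unfolding s_def by (simp add: cnj_sum)
  also have "\<dots> = (\<Sum>j<n. \<Sum>i<n. v$i * complex_of_real (A$$(i,j)) * cnj (v$j))"
    by (rule sum.swap)
  also have "\<dots> = s" unfolding s_def
  proof (intro sum.cong refl)
    fix i j assume "i \<in> {..<n}" "j \<in> {..<n}"
    then have "A$$(j,i) = A$$(i,j)" using sym A
      by (metis carrier_matD index_transpose_mat(1) lessThan_iff)
    then show "v $ j * complex_of_real (A $$ (j, i)) * cnj (v $ i) = cnj (v $ i) * complex_of_real (A $$ (i, j)) * v $ j"
      by simp
  qed
  finally have cs: "cnj s = s" .
  have Nr: "N = complex_of_real (\<Sum>i<n. (cmod (v$i))^2)"
    unfolding N_def of_real_sum by (intro sum.cong refl) (subst complex_norm_square, simp add: mult.commute)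
  have "\<exists>i<n. v$i \<noteq> 0" using v(1,2) by (metis eq_vecI carrier_vecD index_zero_vec)
  then obtain i0 where i0: "i0 < n" "v$i0 \<noteq> 0" by blast
  have pos: "(\<Sum>i<n. (cmod (v$i))^2) > 0"
  proof -
    have "(\<Sum>i<n. (cmod (v$i))^2) \<ge> (cmod (v$i0))^2"
      using i0 by (intro member_le_sum) auto
    moreover have "(cmod (v$i0))^2 > 0" using i0 by simp
    ultimately show ?thesis by linarith
  qed
  have N0: "N \<noteq> 0"
  proof
    assume "N = 0"
    then have "(\<Sum>i<n. (cmod (v$i))^2) = 0" unfolding Nr by (simp only: of_real_eq_0_iff)
    with pos show False by simp
  qed
  have cN: "cnj N = N" by (simp only: Nr complex_cnj_complex_of_real)
  have "cnj z * N = z * N" using cs sz cN by (metis complex_cnj_mult)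
  then have "cnj z = z" using N0 by simp
  then have "Im (cnj z) = Im z" by simp
  then have "Im z = 0" by simp
  then have "z = complex_of_real (Re z)" by (simp add: complex_eq_iff)
  then have "poly (map_poly complex_of_real (char_poly A)) (complex_of_real (Re z)) = 0" using z cp by simp
  then have "poly (char_poly A) (Re z) = 0" by (simp add: of_real_hom.poly_map_poly)
  then show ?thesis using eigenvalue_root_char_poly[OF A] by blast
qed

lemma householder:
  fixes v :: "real vec"
  assumes v: "v \<in> carrier_vec n" and v1: "v \<bullet> v = 1" and n: "n > 0"
  shows "\<exists>W \<in> carrier_mat n n. transpose_mat W * W = 1\<^sub>m n \<and> (\<forall>i<n. W $$ (i,0) = v $ i)"
proof -
  define d where "d = (\<lambda>i j::nat. if i = j then 1 else (0::real))"
  define u where "u = (\<lambda>i. v $ i - d i 0)"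
  define s where "s = (\<Sum>k<n. (u k)^2)"
  have vv: "(\<Sum>k<n. (v$k)^2) = 1" using v1 v by (simp add: scalar_prod_def power2_eq_square lessThan_atLeast0)
  have dsum: "(\<Sum>k<n. d k i * f k) = f i" if "i < n" for i and f :: "nat \<Rightarrow> real"
    using that by (simp add: d_def if_distrib[where f="\<lambda>x. x * _"] sum.delta cong: if_cong)
  have s: "s = 2 - 2 * v $ 0"
  proof -
    have "s = (\<Sum>k<n. (v$k)^2) - 2 * (\<Sum>k<n. d k 0 * v$k) + (\<Sum>k<n. d k 0 * d k 0)"
      unfolding s_def u_def by (simp add: power2_eq_square algebra_simps sum.distrib sum_subtractf sum_distrib_left d_def)
    also have "\<dots> = 2 - 2 * v $ 0" using vv dsum[OF n] dsum[OF n, of "\<lambda>k. d k 0"] by (simp add: d_def)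
    finally show ?thesis .
  qed
  show ?thesis
  proof (cases "v $ 0 = 1")
    case True
    have "v $ i = d i 0" if "i < n" for i
    proof (cases "i = 0")
      case False
      have "(\<Sum>k\<in>{0,i}. (v$k)^2) \<le> (\<Sum>k<n. (v$k)^2)"
        using that n by (intro sum_mono2) auto
      then have "(v$i)^2 \<le> 0" using False True vv by simp
      then show ?thesis using False by (simp add: d_def)
    qed (simp add: True d_def)
    then show ?thesis by (intro bexI[of _ "1\<^sub>m n"]) (auto simp: d_def)
  next
    case False
    define c where "c = 2 / s"
    have s0: "s \<noteq> 0" using False s by simp
    have cs: "c * s = 2" using s0 by (simp add: c_def)
    define W where "W = mat n n (\<lambda>(i,j). d i j - c * u i * u j)"
    have W: "W \<in> carrier_mat n n" by (simp add: W_def)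
    have "transpose_mat W * W = 1\<^sub>m n"
    proof (rule eq_matI)
      fix i j assume i: "i < dim_row (1\<^sub>m n)" and j: "j < dim_col (1\<^sub>m n)"
      then have i: "i < n" and j: "j < n" by auto
      have "(transpose_mat W * W) $$ (i,j) = (\<Sum>k<n. (d k i - c * u k * u i) * (d k j - c * u k * u j))"
        using i j by (simp add: W_def scalar_prod_def lessThan_atLeast0 d_def cong: if_cong)
      also have "\<dots> = (\<Sum>k<n. d k i * d k j) - c * u j * (\<Sum>k<n. d k i * u k) - c * u i * (\<Sum>k<n. d k j * u k)
          + c * c * u i * u j * s"
        unfolding s_def by (simp add: algebra_simps sum.distrib sum_subtractf sum_distrib_left power2_eq_square)
      also have "\<dots> = d i j - 2 * c * u i * u j + c * (c * s) * u i * u j"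
        using dsum[OF i] dsum[OF j] by simp
      also have "\<dots> = d i j" by (simp add: cs)
      finally show "(transpose_mat W * W) $$ (i,j) = 1\<^sub>m n $$ (i,j)" using i j by (simp add: d_def)
    qed (auto simp: W_def)
    moreover have "W $$ (i,0) = v $ i" if "i < n" for i
    proof -
      have "c * u 0 = -1" using cs s0 unfolding u_def s d_def c_def by (simp add: field_simps)
      moreover have "W $$ (i,0) = d i 0 - (c * u 0) * u i" using that n by (simp add: W_def mult_ac)
      ultimately have "W $$ (i,0) = d i 0 + u i" by simp
      then show ?thesis by (simp add: u_def)
    qed
    ultimately show ?thesis using W by blast
  qed
qed

lemma sp_self_pos:
  fixes v :: "real vec"
  assumes v: "v \<in> carrier_vec n" and v0: "v \<noteq> 0\<^sub>v n"
  shows "v \<bullet> v > 0"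
proof -
  have eq: "v \<bullet> v = (\<Sum>i<n. (v$i)^2)" using v by (simp add: scalar_prod_def power2_eq_square lessThan_atLeast0)
  have "\<exists>i<n. v$i \<noteq> 0" using v v0 by (metis eq_vecI carrier_vecD index_zero_vec)
  then obtain i0 where i0: "i0 < n" "v$i0 \<noteq> 0" by blast
  have "(\<Sum>i<n. (v$i)^2) \<ge> (v$i0)^2" using i0 by (intro member_le_sum) auto
  moreover have "(v$i0)^2 > 0" using i0 by simp
  ultimately show ?thesis unfolding eq by linarith
qed

lemma assoc_sq: "A \<in> carrier_mat n n \<Longrightarrow> B \<in> carrier_mat n n \<Longrightarrow> C \<in> carrier_mat n n \<Longrightarrow> A * B * C = A * (B * C)"
  by (rule assoc_mult_mat)
lemma conj_mult:
  fixes W E X :: "'a::comm_ring_1 mat"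
  assumes W: "W \<in> carrier_mat n n" and E: "E \<in> carrier_mat n n" and X: "X \<in> carrier_mat n n"
  shows "transpose_mat (W * E) * X * (W * E) = transpose_mat E * (transpose_mat W * X * W) * E"
proof -
  have WT: "transpose_mat W \<in> carrier_mat n n" and ET: "transpose_mat E \<in> carrier_mat n n"
    and WE: "W * E \<in> carrier_mat n n" and WTX: "transpose_mat W * X \<in> carrier_mat n n"
    using W E X by auto
  have WTXW: "transpose_mat W * X * W \<in> carrier_mat n n" using WTX W by auto
  have "transpose_mat (W * E) * X * (W * E) = transpose_mat E * transpose_mat W * X * (W * E)"
    by (simp only: transpose_mult[OF W E])
  also have "\<dots> = transpose_mat E * (transpose_mat W * X) * (W * E)"
    by (simp only: assoc_sq[OF ET WT X])
  also have "\<dots> = transpose_mat E * ((transpose_mat W * X) * (W * E))"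
    by (rule assoc_sq[OF ET WTX WE])
  also have "(transpose_mat W * X) * (W * E) = (transpose_mat W * X * W) * E"
    by (rule assoc_sq[OF WTX W E, symmetric])
  also have "transpose_mat E * \<dots> = transpose_mat E * (transpose_mat W * X * W) * E"
    by (rule assoc_sq[OF ET WTXW E, symmetric])
  finally show ?thesis .
qed

lemma spectral:
  fixes A :: "real mat"
  assumes "A \<in> carrier_mat n n" "transpose_mat A = A"
  shows "\<exists>P \<in> carrier_mat n n. transpose_mat P * P = 1\<^sub>m n \<and> diagonal_mat (transpose_mat P * A * P)"
  using assms
proof (induction n arbitrary: A)
  case 0
  then show ?case by (intro bexI[of _ "1\<^sub>m 0"]) (auto simp: diagonal_mat_def)
next
  case (Suc n)
  note A = Suc.prems(1) and sym = Suc.prems(2)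
  obtain e where "eigenvalue A e" using real_sym_eigenvalue[OF A sym] by auto
  then obtain v0 where v0: "v0 \<in> carrier_vec (Suc n)" "v0 \<noteq> 0\<^sub>v (Suc n)" "A *\<^sub>v v0 = e \<cdot>\<^sub>v v0"
    unfolding eigenvalue_def eigenvector_def using A by auto
  define v where "v = (1 / sqrt (v0 \<bullet> v0)) \<cdot>\<^sub>v v0"
  have pos: "v0 \<bullet> v0 > 0" by (rule sp_self_pos[OF v0(1,2)])
  have v: "v \<in> carrier_vec (Suc n)" using v0 by (simp add: v_def)
  have vv: "v \<bullet> v = 1" unfolding v_def using v0(1) pos
    by (simp add: real_sqrt_mult[symmetric])
  have Av: "A *\<^sub>v v = e \<cdot>\<^sub>v v" unfolding v_def using v0 A
    by (simp add: mult_mat_vec smult_smult_assoc mult.commute)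
  obtain W where W: "W \<in> carrier_mat (Suc n) (Suc n)" and WW: "transpose_mat W * W = 1\<^sub>m (Suc n)"
    and Wc: "\<forall>i<Suc n. W $$ (i,0) = v $ i"
    using householder[OF v vv] by auto
  have colW: "col W 0 = v" using W v Wc by (intro eq_vecI) auto
  define A' where "A' = transpose_mat W * A * W"
  have A': "A' \<in> carrier_mat (Suc n) (Suc n)" using W A by (simp add: A'_def)
  have symA': "transpose_mat A' = A'"
  proof -
    have WT: "transpose_mat W \<in> carrier_mat (Suc n) (Suc n)" using W by simp
    have AW: "A * W \<in> carrier_mat (Suc n) (Suc n)" using W A by simp
    have "A' = transpose_mat W * (A * W)" unfolding A'_def using W A by simp
    then have "transpose_mat A' = transpose_mat (A * W) * W"
      using transpose_mult[OF WT AW] by simp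
    also have "transpose_mat (A * W) = transpose_mat W * A" using transpose_mult[OF A W] sym by simp
    finally show ?thesis unfolding A'_def .
  qed
  have A'0: "A' $$ (i,0) = (if i = 0 then e else 0)" if i: "i < Suc n" for i
  proof -
    have "A' $$ (i,0) = row (transpose_mat W) i \<bullet> col (A * W) 0"
      unfolding A'_def using W A i by (simp add: assoc_mult_mat[of _ "Suc n" "Suc n"])
    also have "col (A * W) 0 = A *\<^sub>v col W 0" by (rule col_mult2[OF A W]) simp
    also have "\<dots> = e \<cdot>\<^sub>v v" unfolding colW Av ..
    also have "row (transpose_mat W) i \<bullet> (e \<cdot>\<^sub>v v) = e * (row (transpose_mat W) i \<bullet> col W 0)"
      using W v i colW by simp
    also have "row (transpose_mat W) i \<bullet> col W 0 = (transpose_mat W * W) $$ (i,0)" using W i by simp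
    finally show ?thesis using WW i by simp
  qed
  have A'sym: "A' $$ (i,j) = A' $$ (j,i)" if "i < Suc n" "j < Suc n" for i j
    using arg_cong[OF symA', of "\<lambda>M. M $$ (j,i)"] that A' by simp
  define A3 where "A3 = mat n n (\<lambda>(i,j). A' $$ (Suc i, Suc j))"
  have A3: "A3 \<in> carrier_mat n n" by (simp add: A3_def)
  have symA3: "transpose_mat A3 = A3" unfolding A3_def by (rule eq_matI) (auto simp: A'sym)
  obtain P3 where P3: "P3 \<in> carrier_mat n n" and P3P3: "transpose_mat P3 * P3 = 1\<^sub>m n"
    and D3: "diagonal_mat (transpose_mat P3 * A3 * P3)"
    using Suc.IH[OF A3 symA3] by auto
  define E where "E = four_block_mat (1\<^sub>m 1) (0\<^sub>m 1 n) (0\<^sub>m n 1) P3"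
  have E: "E \<in> carrier_mat (Suc n) (Suc n)"
    using four_block_carrier_mat[of "1\<^sub>m 1" 1 1 P3 n n "0\<^sub>m 1 n" "0\<^sub>m n 1"] P3 by (simp add: E_def)
  have P3T: "transpose_mat P3 \<in> carrier_mat n n" using P3 by simp
  have ET: "transpose_mat E = four_block_mat (1\<^sub>m 1) (0\<^sub>m 1 n) (0\<^sub>m n 1) (transpose_mat P3)"
    unfolding E_def using P3 by (subst transpose_four_block_mat) auto
  have A'b: "A' = four_block_mat (mat 1 1 (\<lambda>_. e)) (0\<^sub>m 1 n) (0\<^sub>m n 1) A3"
  proof (rule eq_matI)
    fix i j assume i: "i < dim_row (four_block_mat (mat 1 1 (\<lambda>_. e)) (0\<^sub>m 1 n) (0\<^sub>m n 1) A3)"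
      and j: "j < dim_col (four_block_mat (mat 1 1 (\<lambda>_. e)) (0\<^sub>m 1 n) (0\<^sub>m n 1) A3)"
    then have i: "i < Suc n" and j: "j < Suc n" using A3 by auto
    show "A' $$ (i,j) = four_block_mat (mat 1 1 (\<lambda>_. e)) (0\<^sub>m 1 n) (0\<^sub>m n 1) A3 $$ (i,j)"
    proof (cases "j = 0")
      case True then show ?thesis using i A3 A'0 by auto
    next
      case False
      show ?thesis
      proof (cases "i = 0")
        case True then show ?thesis using j False A3 A'0[OF j] A'sym[OF i j] by auto
      next
        case False2: False
        then show ?thesis using i j False A3 by (cases i; cases j) (auto simp: A3_def)
      qed
    qed
  qed (use A' A3 in auto)
  define P where "P = W * E"
  have P: "P \<in> carrier_mat (Suc n) (Suc n)" using W E by (simp add: P_def)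
  have PT: "transpose_mat (W * E) = transpose_mat E * transpose_mat W"
    using W E by (simp add: transpose_mult[of _ "Suc n" "Suc n"])
  have WTc: "transpose_mat W \<in> carrier_mat (Suc n) (Suc n)" using W by simp
  have ETc: "transpose_mat E \<in> carrier_mat (Suc n) (Suc n)" using E by simp
  have "transpose_mat P * P = transpose_mat P * 1\<^sub>m (Suc n) * P" using P by simp
  also have "\<dots> = transpose_mat E * (transpose_mat W * 1\<^sub>m (Suc n) * W) * E"
    unfolding P_def by (rule conj_mult[OF W E]) simp
  also have "\<dots> = transpose_mat E * (transpose_mat W * W) * E" using W by simp
  also have "\<dots> = transpose_mat E * E" using WW E by simp
  also have "\<dots> = 1\<^sub>m (Suc n)" unfolding ET unfolding E_def using P3 P3P3
    by (subst mult_four_block_mat[OF one_carrier_mat zero_carrier_mat zero_carrier_mat P3T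
          one_carrier_mat zero_carrier_mat zero_carrier_mat P3]) auto
  finally have PP: "transpose_mat P * P = 1\<^sub>m (Suc n)" .
  have "transpose_mat P * A * P = transpose_mat E * A' * E"
    unfolding P_def A'_def by (rule conj_mult[OF W E A])
  also have "\<dots> = four_block_mat (mat 1 1 (\<lambda>_. e)) (0\<^sub>m 1 n) (0\<^sub>m n 1) (transpose_mat P3 * A3 * P3)"
  proof -
    have M: "mat 1 1 (\<lambda>_. e) \<in> carrier_mat 1 1" by simp
    have EA: "transpose_mat E * A' = four_block_mat (mat 1 1 (\<lambda>_. e)) (0\<^sub>m 1 n) (0\<^sub>m n 1) (transpose_mat P3 * A3)"
      unfolding ET A'b using P3 A3
      by (subst mult_four_block_mat[OF one_carrier_mat zero_carrier_mat zero_carrier_mat P3T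
          M zero_carrier_mat zero_carrier_mat A3]) auto
    moreover have "transpose_mat P3 * A3 \<in> carrier_mat n n" using P3 A3 by simp
    ultimately show ?thesis unfolding EA unfolding E_def using P3 A3
      by (subst mult_four_block_mat[OF M zero_carrier_mat zero_carrier_mat _
          one_carrier_mat zero_carrier_mat zero_carrier_mat P3]) auto
  qed
  finally have D: "transpose_mat P * A * P = four_block_mat (mat 1 1 (\<lambda>_. e)) (0\<^sub>m 1 n) (0\<^sub>m n 1) (transpose_mat P3 * A3 * P3)" .
  have "diagonal_mat (transpose_mat P * A * P)"
    unfolding D diagonal_mat_def
  proof (intro allI impI)
    fix i j assume i: "i < dim_row (four_block_mat (mat 1 1 (\<lambda>_. e)) (0\<^sub>m 1 n) (0\<^sub>m n 1) (transpose_mat P3 * A3 * P3))"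
      and j: "j < dim_col (four_block_mat (mat 1 1 (\<lambda>_. e)) (0\<^sub>m 1 n) (0\<^sub>m n 1) (transpose_mat P3 * A3 * P3))"
      and ij: "i \<noteq> j"
    then have i: "i < Suc n" and j: "j < Suc n" using P3 A3 by auto
    have dd: "(transpose_mat P3 * A3 * P3) $$ (i - 1, j - 1) = 0" if "i \<noteq> 0" "j \<noteq> 0"
      using D3 that i j ij P3 A3 unfolding diagonal_mat_def by auto
    show "four_block_mat (mat 1 1 (\<lambda>_. e)) (0\<^sub>m 1 n) (0\<^sub>m n 1) (transpose_mat P3 * A3 * P3) $$ (i, j) = 0"
      using i j ij P3 A3 dd by auto
  qed
  then show ?case using P PP by blast
qed

lemma order_prod_linear:
  fixes es :: "real list"
  shows "order x (\<Prod>a\<leftarrow>es. [:- a, 1:]) = count_list es x"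
proof (induction es)
  case Nil then show ?case by (simp add: order_0I)
next
  case (Cons a es)
  have nz: "(\<Prod>a\<leftarrow>es. [:- a, 1:]) \<noteq> 0" by (auto simp: prod_list_zero_iff)
  have "order x ([:- a, 1:] * (\<Prod>a\<leftarrow>es. [:- a, 1:])) = order x [:- a, 1:] + order x (\<Prod>a\<leftarrow>es. [:- a, 1:])"
    by (rule order_mult) (metis nz mult_eq_0_iff pCons_eq_0_iff one_neq_zero)
  then have "order x (\<Prod>a\<leftarrow>a # es. [:- a, 1:]) = order x [:- a, 1:] + order x (\<Prod>a\<leftarrow>es. [:- a, 1:])"
    by simp
  then show ?case using Cons by (simp add: order_linear')
qed

lemma poly_prod_linear:
  fixes es :: "real list"
  shows "poly (\<Prod>a\<leftarrow>es. [:- a, 1:]) x = 0 \<longleftrightarrow> x \<in> set es"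
  by (induction es) auto

lemma sum_count_list:
  assumes "finite S"
  shows "(\<Sum>x\<in>S. count_list es x) = length (filter (\<lambda>x. x \<in> S) es)"
proof (induction es)
  case Nil then show ?case by simp
next
  case (Cons a es)
  have "(\<Sum>x\<in>S. count_list (a # es) x) = (\<Sum>x\<in>S. count_list es x + (if a = x then 1 else 0))"
    by (intro sum.cong) auto
  also have "\<dots> = (\<Sum>x\<in>S. count_list es x) + (\<Sum>x\<in>S. if a = x then 1 else 0)"
    by (rule sum.distrib)
  also have "(\<Sum>x\<in>S. if a = x then 1 else 0) = (if a \<in> S then 1 else 0)"
    using assms by (simp add: sum.delta)
  finally show ?case using Cons by simp
qed

lemma count_eigs:
  fixes G P :: "real mat" and Q :: "real \<Rightarrow> bool"
  assumes G: "G \<in> carrier_mat n n" and P: "P \<in> carrier_mat n n"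
    and PP: "transpose_mat P * P = 1\<^sub>m n" and Dd: "diagonal_mat (transpose_mat P * G * P)"
  shows "(\<Sum>x\<in>{x. Q x \<and> eigenvalue G x}. order x (char_poly G))
     = card {k. k < n \<and> Q ((transpose_mat P * G * P) $$ (k,k))}"
proof -
  define D where "D = transpose_mat P * G * P"
  have PT: "transpose_mat P \<in> carrier_mat n n" using P by simp
  have D: "D \<in> carrier_mat n n" using P G by (simp add: D_def)
  have PP': "P * transpose_mat P = 1\<^sub>m n" by (rule mat_mult_left_right_inverse[OF PT P PP])
  have PTG: "transpose_mat P * G \<in> carrier_mat n n" using PT G by simp
  have PPTG: "P * (transpose_mat P * G) \<in> carrier_mat n n" using PTG P by simp
  have "P * D * transpose_mat P = P * ((transpose_mat P * G) * P) * transpose_mat P" by (simp add: D_def)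
  also have "P * ((transpose_mat P * G) * P) = (P * (transpose_mat P * G)) * P"
    by (rule assoc_sq[OF P PTG P, symmetric])
  also have "(P * (transpose_mat P * G)) * P * transpose_mat P = (P * (transpose_mat P * G)) * (P * transpose_mat P)"
    by (rule assoc_sq[OF PPTG P PT])
  also have "P * (transpose_mat P * G) = P * transpose_mat P * G"
    by (rule assoc_sq[OF P PT G, symmetric])
  also have "\<dots> = G" using G by (simp only: PP') simp
  finally have GD: "G = P * D * transpose_mat P" using PP' G by simp
  have "similar_mat_wit G D P (transpose_mat P)"
    unfolding similar_mat_wit_def Let_def using G D P PT PP PP' GD by auto
  then have "similar_mat G D" unfolding similar_mat_def by blast
  then have cpGD: "char_poly G = char_poly D" by (rule char_poly_similar)
  have ut: "upper_triangular D" using Dd unfolding D_def[symmetric] diagonal_mat_def upper_triangular_def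
    using D by auto
  define es where "es = diag_mat D"
  have cp: "char_poly G = (\<Prod>a\<leftarrow>es. [:- a, 1:])"
    unfolding cpGD es_def by (rule char_poly_upper_triangular[OF D ut])
  have ev: "eigenvalue G x \<longleftrightarrow> x \<in> set es" for x
    using eigenvalue_root_char_poly[OF G] cp poly_prod_linear by simp
  have S: "{x. Q x \<and> eigenvalue G x} = {x. Q x \<and> x \<in> set es}" using ev by auto
  have fin: "finite {x. Q x \<and> x \<in> set es}" by simp
  have "(\<Sum>x\<in>{x. Q x \<and> eigenvalue G x}. order x (char_poly G))
      = (\<Sum>x\<in>{x. Q x \<and> x \<in> set es}. count_list es x)"
    unfolding S cp order_prod_linear ..
  also have "\<dots> = length (filter (\<lambda>x. x \<in> {x. Q x \<and> x \<in> set es}) es)"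
    by (rule sum_count_list[OF fin])
  also have "filter (\<lambda>x. x \<in> {x. Q x \<and> x \<in> set es}) es = filter Q es"
    by (rule filter_cong) auto
  also have "length (filter Q es) = card {k. k < n \<and> Q (D $$ (k,k))}"
    unfolding length_filter_conv_card es_def diag_mat_def using D
    by (intro arg_cong[where f=card]) auto
  finally show ?thesis unfolding D_def .
qed

lemma mult_zero_vec': "A \<in> carrier_mat nr nc \<Longrightarrow> A *\<^sub>v 0\<^sub>v nc = 0\<^sub>v nr"
  by (intro eq_vecI) auto

lemma exists_orth:
  fixes S :: "real vec set"
  assumes fin: "finite S" and S: "S \<subseteq> carrier_vec n" and card: "card S < n"
  shows "\<exists>w \<in> carrier_vec n. w \<noteq> 0\<^sub>v n \<and> (\<forall>s\<in>S. s \<bullet> w = 0)"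
proof -
  obtain xs where xs: "set xs = S" "distinct xs" using finite_distinct_list[OF fin] by auto
  have len: "length xs = card S" using xs distinct_card by fastforce
  have n: "n > 0" using card by simp
  define c where "c = (\<lambda>i. if i < length xs then xs ! i else 0\<^sub>v n)"
  have xsc: "xs ! i \<in> carrier_vec n" if "i < length xs" for i using S xs nth_mem[OF that] by auto
  have c: "c \<in> {0..<n} \<rightarrow> carrier_vec n" using xsc unfolding c_def by auto
  define M where "M = mat\<^sub>r n n (\<lambda>i. if i = n - 1 then 0\<^sub>v n else c i)"
  have M: "M \<in> carrier_mat n n" by (simp add: M_def)
  have "det M = 0" unfolding M_def by (rule det_row_0[OF _ c]) (use n in simp)
  then obtain w where w: "w \<in> carrier_vec n" "w \<noteq> 0\<^sub>v n" "M *\<^sub>v w = 0\<^sub>v n"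
    using det_0_iff_vec_prod_zero_field[OF M] by auto
  have "s \<bullet> w = 0" if s: "s \<in> S" for s
  proof -
    obtain i where i: "i < length xs" "s = xs ! i" using s xs by (metis in_set_conv_nth)
    have i': "i < n" "i \<noteq> n - 1" using i len card by auto
    have sc: "s \<in> carrier_vec n" using s S by auto
    have "row M i = s" unfolding M_def using i i' sc by (simp add: c_def)
    then have "(M *\<^sub>v w) $ i = s \<bullet> w" using i' M by simp
    then show ?thesis using w(3) i' by simp
  qed
  then show ?thesis using w by blast
qed

lemma sylv_exists:
  fixes P :: "real mat"
  assumes P: "P \<in> carrier_mat n n" and K: "K \<subseteq> {..<n}" and F: "finite F" "F \<subseteq> carrier_vec n"
    and lt: "card F < card K"
  shows "\<exists>w \<in> carrier_vec n. w \<noteq> 0\<^sub>v n \<and> (\<forall>k<n. k \<notin> K \<longrightarrow> w$k = 0) \<and> (\<forall>f\<in>F. f \<bullet> (P *\<^sub>v w) = 0)"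
proof -
  define S where "S = (\<lambda>f. transpose_mat P *\<^sub>v f) ` F \<union> (\<lambda>k. (unit_vec n k :: real vec)) ` ({..<n} - K)"
  have finK: "finite K" using K finite_subset by blast
  have "card S \<le> card ((\<lambda>f. transpose_mat P *\<^sub>v f) ` F) + card ((\<lambda>k. (unit_vec n k :: real vec)) ` ({..<n} - K))"
    unfolding S_def by (rule Finite_Set.card_Un_le)
  also have "\<dots> \<le> card F + card ({..<n} - K)" by (intro add_mono card_image_le) (use F in auto)
  also have "card ({..<n} - K) = n - card K" using K finK by (simp add: card_Diff_subset)
  finally have "card S < n" using lt K finK
    by (metis (no_types, lifting) add_diff_inverse_nat add_less_cancel_right card_lessThan card_mono
        finite_lessThan le_less_trans less_diff_conv2 nat_diff_split not_less)
  moreover have "finite S" using F unfolding S_def by auto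
  moreover have "S \<subseteq> carrier_vec n" unfolding S_def using F P by auto
  ultimately obtain w where w: "w \<in> carrier_vec n" "w \<noteq> 0\<^sub>v n" "\<forall>s\<in>S. s \<bullet> w = 0"
    using exists_orth by blast
  have "w $ k = 0" if "k < n" "k \<notin> K" for k
  proof -
    have "unit_vec n k \<in> S" unfolding S_def using that by auto
    then have "unit_vec n k \<bullet> w = 0" using w(3) by blast
    moreover have "unit_vec n k \<bullet> w = w $ k" by (rule scalar_prod_left_unit[OF w(1) that(1)])
    ultimately show ?thesis by simp
  qed
  moreover have "f \<bullet> (P *\<^sub>v w) = 0" if f: "f \<in> F" for f
  proof -
    have "transpose_mat P *\<^sub>v f \<in> S" unfolding S_def using f by auto
    then have "(transpose_mat P *\<^sub>v f) \<bullet> w = 0" using w by auto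
    moreover have "(transpose_mat P *\<^sub>v f) \<bullet> w = f \<bullet> (P *\<^sub>v w)"
      by (rule transpose_vec_mult_scalar[OF P w(1)]) (use f F in auto)
    ultimately show ?thesis by simp
  qed
  ultimately show ?thesis using w by blast
qed

context
  fixes G P :: "real mat" and n :: nat
  assumes G: "G \<in> carrier_mat n n" and P: "P \<in> carrier_mat n n"
    and PP: "transpose_mat P * P = 1\<^sub>m n" and Dd: "diagonal_mat (transpose_mat P * G * P)"
begin

lemma Dw:
  assumes w: "w \<in> carrier_vec n"
  shows "transpose_mat P *\<^sub>v (G *\<^sub>v (P *\<^sub>v w)) = vec n (\<lambda>k. (transpose_mat P * G * P) $$ (k,k) * w $ k)"
proof -
  define D where "D = transpose_mat P * G * P"
  have D: "D \<in> carrier_mat n n" using G P by (simp add: D_def)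
  have PT: "transpose_mat P \<in> carrier_mat n n" using P by simp
  have PTG: "transpose_mat P * G \<in> carrier_mat n n" using P G by simp
  have Pw: "P *\<^sub>v w \<in> carrier_vec n" using P w by simp
  have "D *\<^sub>v w = (transpose_mat P * G) *\<^sub>v (P *\<^sub>v w)"
    unfolding D_def by (rule assoc_mult_mat_vec[OF PTG P w])
  also have "\<dots> = transpose_mat P *\<^sub>v (G *\<^sub>v (P *\<^sub>v w))"
    by (rule assoc_mult_mat_vec[OF PT G Pw])
  finally have "transpose_mat P *\<^sub>v (G *\<^sub>v (P *\<^sub>v w)) = D *\<^sub>v w" by simp
  also have "\<dots> = vec n (\<lambda>k. D $$ (k,k) * w $ k)"
  proof (rule eq_vecI)
    fix k assume "k < dim_vec (vec n (\<lambda>k. D $$ (k,k) * w $ k))"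
    then have k: "k < n" by simp
    have "(D *\<^sub>v w) $ k = (\<Sum>j\<in>{0..<n}. D $$ (k,j) * w $ j)"
      using D w k by (simp add: scalar_prod_def)
    also have "\<dots> = (\<Sum>j\<in>{0..<n}. if j = k then D $$ (k,k) * w $ k else 0)"
      using Dd D k unfolding D_def[symmetric] diagonal_mat_def by (intro sum.cong) auto
    also have "\<dots> = D $$ (k,k) * w $ k" using k by simp
    finally show "(D *\<^sub>v w) $ k = vec n (\<lambda>k. D $$ (k,k) * w $ k) $ k" using k by simp
  qed (use D in simp)
  finally show ?thesis unfolding D_def .
qed

lemma quad_form:
  assumes w: "w \<in> carrier_vec n"
  shows "(P *\<^sub>v w) \<bullet> (G *\<^sub>v (P *\<^sub>v w)) = (\<Sum>k<n. (transpose_mat P * G * P) $$ (k,k) * (w $ k)^2)"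
proof -
  have Pw: "P *\<^sub>v w \<in> carrier_vec n" using P w by simp
  have GPw: "G *\<^sub>v (P *\<^sub>v w) \<in> carrier_vec n" using G Pw by simp
  have "(P *\<^sub>v w) \<bullet> (G *\<^sub>v (P *\<^sub>v w)) = (G *\<^sub>v (P *\<^sub>v w)) \<bullet> (P *\<^sub>v w)"
    by (rule comm_scalar_prod[OF Pw GPw])
  also have "\<dots> = (transpose_mat P *\<^sub>v (G *\<^sub>v (P *\<^sub>v w))) \<bullet> w"
    by (rule transpose_vec_mult_scalar[OF P w GPw, symmetric])
  also have "\<dots> = vec n (\<lambda>k. (transpose_mat P * G * P) $$ (k,k) * w $ k) \<bullet> w" by (simp add: Dw[OF w])
  also have "\<dots> = (\<Sum>k<n. (transpose_mat P * G * P) $$ (k,k) * (w $ k)^2)"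
    using w by (simp add: scalar_prod_def lessThan_atLeast0 power2_eq_square mult.assoc)
  finally show ?thesis .
qed

lemma Pw_nz:
  assumes w: "w \<in> carrier_vec n" "w \<noteq> 0\<^sub>v n"
  shows "P *\<^sub>v w \<noteq> 0\<^sub>v n"
proof
  assume "P *\<^sub>v w = 0\<^sub>v n"
  then have "transpose_mat P *\<^sub>v (P *\<^sub>v w) = 0\<^sub>v n" using P mult_zero_vec'[of "transpose_mat P" n n] by simp
  moreover have "transpose_mat P *\<^sub>v (P *\<^sub>v w) = w"
    using P w PP by (simp add: assoc_mult_mat_vec[symmetric, of _ n n _ n])
  ultimately show False using w by simp
qed

lemma sylv_sign:
  fixes \<sigma> :: real
  assumes F: "finite F" "F \<subseteq> carrier_vec n"
    and H: "\<forall>x\<in>carrier_vec n. (\<forall>f\<in>F. f \<bullet> x = 0) \<longrightarrow> \<sigma> * (x \<bullet> (G *\<^sub>v x)) \<le> 0"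
  shows "card {k. k < n \<and> \<sigma> * (transpose_mat P * G * P) $$ (k,k) > 0} \<le> card F"
proof -
  define K where "K = {k. k < n \<and> \<sigma> * (transpose_mat P * G * P) $$ (k,k) > 0}"
  have "card K \<le> card F"
  proof (rule ccontr)
  assume "\<not> card K \<le> card F"
  then have lt: "card F < card K" by simp
  have K: "K \<subseteq> {..<n}" unfolding K_def by auto
  obtain w where w: "w \<in> carrier_vec n" "w \<noteq> 0\<^sub>v n" "\<forall>k<n. k \<notin> K \<longrightarrow> w$k = 0"
    "\<forall>f\<in>F. f \<bullet> (P *\<^sub>v w) = 0"
    using sylv_exists[OF P K F lt] by blast
  have Pw: "P *\<^sub>v w \<in> carrier_vec n" using P w by simp
  have le: "\<sigma> * ((P *\<^sub>v w) \<bullet> (G *\<^sub>v (P *\<^sub>v w))) \<le> 0" using H Pw w(4) by blast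
  obtain k0 where k0: "k0 < n" "w $ k0 \<noteq> 0" using w(1,2) by (metis eq_vecI carrier_vecD index_zero_vec)
  then have k0K: "k0 \<in> K" using w(3) by blast
  have "\<sigma> * ((P *\<^sub>v w) \<bullet> (G *\<^sub>v (P *\<^sub>v w))) = (\<Sum>k<n. \<sigma> * (transpose_mat P * G * P) $$ (k,k) * (w $ k)^2)"
    unfolding quad_form[OF w(1)] by (simp add: sum_distrib_left mult.assoc)
  also have "\<dots> \<ge> \<sigma> * (transpose_mat P * G * P) $$ (k0,k0) * (w $ k0)^2"
  proof (rule member_le_sum)
    fix k assume "k \<in> {..<n} - {k0}"
    then show "0 \<le> \<sigma> * (transpose_mat P * G * P) $$ (k,k) * (w $ k)^2"
      using w(3) unfolding K_def by (cases "k \<in> K") (auto simp: K_def)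
  qed (use k0 in auto)
  moreover have "\<sigma> * (transpose_mat P * G * P) $$ (k0,k0) * (w $ k0)^2 > 0"
    using k0K k0 unfolding K_def by simp
  ultimately show False using le by linarith
  qed
  then show ?thesis unfolding K_def .
qed

lemma sylv_zero:
  assumes F: "finite F" "F \<subseteq> carrier_vec n"
    and H: "\<forall>x\<in>carrier_vec n. G *\<^sub>v x = 0\<^sub>v n \<and> (\<forall>f\<in>F. f \<bullet> x = 0) \<longrightarrow> x = 0\<^sub>v n"
  shows "card {k. k < n \<and> (transpose_mat P * G * P) $$ (k,k) = 0} \<le> card F"
proof -
  define K where "K = {k. k < n \<and> (transpose_mat P * G * P) $$ (k,k) = 0}"
  have "card K \<le> card F"
  proof (rule ccontr)
  assume "\<not> card K \<le> card F"
  then have lt: "card F < card K" by simp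
  have K: "K \<subseteq> {..<n}" unfolding K_def by auto
  obtain w where w: "w \<in> carrier_vec n" "w \<noteq> 0\<^sub>v n" "\<forall>k<n. k \<notin> K \<longrightarrow> w$k = 0"
    "\<forall>f\<in>F. f \<bullet> (P *\<^sub>v w) = 0"
    using sylv_exists[OF P K F lt] by blast
  have Pw: "P *\<^sub>v w \<in> carrier_vec n" using P w by simp
  have PT: "transpose_mat P \<in> carrier_mat n n" using P by simp
  have PP': "P * transpose_mat P = 1\<^sub>m n" by (rule mat_mult_left_right_inverse[OF PT P PP])
  have "vec n (\<lambda>k. (transpose_mat P * G * P) $$ (k,k) * w $ k) = 0\<^sub>v n"
    using w(3) unfolding K_def by (intro eq_vecI) auto
  then have z: "transpose_mat P *\<^sub>v (G *\<^sub>v (P *\<^sub>v w)) = 0\<^sub>v n" using Dw[OF w(1)] by simp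
  have "G *\<^sub>v (P *\<^sub>v w) = (P * transpose_mat P) *\<^sub>v (G *\<^sub>v (P *\<^sub>v w))"
    using PP' G Pw by simp
  also have "\<dots> = P *\<^sub>v (transpose_mat P *\<^sub>v (G *\<^sub>v (P *\<^sub>v w)))"
    using P G Pw by (simp add: assoc_mult_mat_vec[of _ n n _ n])
  also have "\<dots> = 0\<^sub>v n" unfolding z using P by (rule mult_zero_vec')
  finally have "G *\<^sub>v (P *\<^sub>v w) = 0\<^sub>v n" .
  then have "P *\<^sub>v w = 0\<^sub>v n" using H Pw w(4) by blast
  then show False using Pw_nz[OF w(1,2)] by simp
  qed
  then show ?thesis unfolding K_def .
qed

end

lemma dual_aff:
  fixes y :: "nat \<Rightarrow> real vec" and x :: "real vec"
  assumes aff: "affinely_independent n y {1..n+1}"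
    and yc: "\<forall>i\<in>{1..n+1}. y i \<in> carrier_vec n"
    and x: "x \<in> carrier_vec n"
    and eq: "\<forall>i\<in>{1..n+1}. y i \<bullet> x = t"
  shows "x = 0\<^sub>v n"
proof (rule ccontr)
  assume xnz: "x \<noteq> 0\<^sub>v n"
  define M where "M = mat (Suc n) (Suc n) (\<lambda>(r,a). if a < n then y (Suc r) $ a else (1::real))"
  have M: "M \<in> carrier_mat (Suc n) (Suc n)" by (simp add: M_def)
  define z where "z = vec (Suc n) (\<lambda>a. if a < n then x $ a else - t)"
  have z: "z \<in> carrier_vec (Suc n)" by (simp add: z_def)
  have "M *\<^sub>v z = 0\<^sub>v (Suc n)"
  proof (rule eq_vecI)
    fix r assume "r < dim_vec (0\<^sub>v (Suc n) :: real vec)"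
    then have r: "r < Suc n" by simp
    have yr: "y (Suc r) \<in> carrier_vec n" using yc r by auto
    have "(M *\<^sub>v z) $ r = (\<Sum>a<Suc n. M $$ (r,a) * z $ a)"
      using M z r by (simp add: scalar_prod_def lessThan_atLeast0)
    also have "\<dots> = (\<Sum>a<n. y (Suc r) $ a * x $ a) - t"
      using r by (simp add: M_def z_def)
    also have "(\<Sum>a<n. y (Suc r) $ a * x $ a) = y (Suc r) \<bullet> x"
      using x by (simp add: scalar_prod_def lessThan_atLeast0)
    also have "\<dots> = t" using eq r by auto
    finally show "(M *\<^sub>v z) $ r = 0\<^sub>v (Suc n) $ r" using r by simp
  qed (use M in simp)
  moreover have "z \<noteq> 0\<^sub>v (Suc n)"
  proof
    assume "z = 0\<^sub>v (Suc n)"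
    have "x $ a = 0" if "a < n" for a
    proof -
      have "z $ a = 0" using \<open>z = 0\<^sub>v (Suc n)\<close> that by simp
      moreover have "z $ a = x $ a" using that by (simp add: z_def)
      ultimately show ?thesis by simp
    qed
    then have "x = 0\<^sub>v n" using x by (intro eq_vecI) auto
    then show False using xnz by simp
  qed
  ultimately have "det M = 0" using det_0_iff_vec_prod_zero_field[OF M] z by blast
  then have "det (transpose_mat M) = 0" using det_transpose[OF M] by simp
  moreover have MT: "transpose_mat M \<in> carrier_mat (Suc n) (Suc n)" using M by simp
  ultimately obtain c where c: "c \<in> carrier_vec (Suc n)" "c \<noteq> 0\<^sub>v (Suc n)" "transpose_mat M *\<^sub>v c = 0\<^sub>v (Suc n)"
    using det_0_iff_vec_prod_zero_field[OF MT] by blast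
  have MTc: "(\<Sum>r<Suc n. M $$ (r,a) * c $ r) = 0" if a: "a < Suc n" for a
  proof -
    have "(transpose_mat M *\<^sub>v c) $ a = (\<Sum>r<Suc n. M $$ (r,a) * c $ r)"
      using M c(1) a by (simp add: scalar_prod_def lessThan_atLeast0)
    then show ?thesis using c(3) a by simp
  qed
  define cc where "cc = (\<lambda>i. c $ (i - 1))"
  have sh: "(\<Sum>i\<in>{1..n+1}. f i) = (\<Sum>r<Suc n. f (Suc r))" for f :: "nat \<Rightarrow> real"
  proof -
    have "(\<Sum>i\<in>{Suc 0..Suc n}. f i) = (\<Sum>r\<in>{0..n}. f (Suc r))" by (rule sum.shift_bounds_cl_Suc_ivl)
    then show ?thesis by (simp add: atLeast0AtMost lessThan_Suc_atMost)
  qed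
  have "(\<Sum>i\<in>{1..n+1}. cc i) = 0"
    unfolding sh cc_def using MTc[of n] by (simp add: M_def)
  moreover have "(\<Sum>i\<in>{1..n+1}. cc i * y i $ a) = 0" if a: "a < n" for a
    unfolding sh cc_def using MTc[of a] a by (simp add: M_def mult.commute)
  ultimately have "\<forall>i\<in>{1..n+1}. cc i = 0" using aff unfolding affinely_independent_def by blast
  then have "c $ r = 0" if "r < Suc n" for r
  proof -
    have "Suc r \<in> {1..n+1}" using that by auto
    then have "cc (Suc r) = 0" using \<open>\<forall>i\<in>{1..n+1}. cc i = 0\<close> by blast
    then show ?thesis by (simp add: cc_def)
  qed
  then have "c = 0\<^sub>v (Suc n)" using c(1) by (intro eq_vecI) auto
  then show False using c(2) by simp
qed

lemma card3:
  fixes f :: "'a \<Rightarrow> real"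
  assumes "finite X"
  shows "card {x\<in>X. f x > 0} + card {x\<in>X. f x < 0} + card {x\<in>X. f x = 0} = card X"
proof -
  have X: "{x\<in>X. f x > 0} \<union> ({x\<in>X. f x < 0} \<union> {x\<in>X. f x = 0}) = X" by auto
  have "card ({x\<in>X. f x > 0} \<union> ({x\<in>X. f x < 0} \<union> {x\<in>X. f x = 0}))
      = card {x\<in>X. f x > 0} + card ({x\<in>X. f x < 0} \<union> {x\<in>X. f x = 0})"
    by (rule card_Un_disjoint) (use assms in auto)
  then have "card X = card {x\<in>X. f x > 0} + card ({x\<in>X. f x < 0} \<union> {x\<in>X. f x = 0})"
    unfolding X .
  also have "card ({x\<in>X. f x < 0} \<union> {x\<in>X. f x = 0}) = card {x\<in>X. f x < 0} + card {x\<in>X. f x = 0}"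
    by (rule card_Un_disjoint) (use assms in auto)
  finally show ?thesis by simp
qed

lemma split0: "(\<Sum>i\<in>{0..n+1::nat}. f i) = f 0 + (\<Sum>i\<in>{1..n+1}. (f i :: real))"
  using sum.atLeast_Suc_atMost[of 0 "n+1" f] by simp

theorem lemma4p1:
  fixes n :: nat and y :: "nat \<Rightarrow> real vec" and l :: "nat \<Rightarrow> real"
  assumes dims: "\<forall>i\<in>{0..n+1}. dim_vec (y i) = n"
    and inj: "inj_on y {1..n+1}"
    and aff: "affinely_independent n y {1..n+1}"
    and bary_sum: "(\<Sum>i\<in>{1..n+1}. l i) = 1"
    and bary_comb: "\<forall>a<n. (\<Sum>i\<in>{1..n+1}. l i * y i $ a) = y 0 $ a"
    and l0: "l 0 = -1"
  shows "num_pos_eigenvalues (mat n n (\<lambda>(a, b). \<Sum>i\<in>{0..n+1}. l i * y i $ a * y i $ b))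
           = card {i\<in>{0..n+1}. l i > 0} - 1
       \<and> num_neg_eigenvalues (mat n n (\<lambda>(a, b). \<Sum>i\<in>{0..n+1}. l i * y i $ a * y i $ b))
           = card {i\<in>{0..n+1}. l i < 0} - 1"
proof -
  define G where "G = mat n n (\<lambda>(a, b). \<Sum>i\<in>{0..n+1}. l i * y i $ a * y i $ b)"
  have yc: "y i \<in> carrier_vec n" if "i \<in> {0..n+1}" for i by (rule carrier_vecI) (use dims that in blast)
  have yc1: "\<forall>i\<in>{1..n+1}. y i \<in> carrier_vec n" using yc by auto
  have G: "G \<in> carrier_mat n n" by (simp add: G_def)
  have symG: "transpose_mat G = G"
  proof (rule eq_matI)
    fix i j assume ij: "i < dim_row G" "j < dim_col G"
    then have "i < n" "j < n" using G by auto
    then show "transpose_mat G $$ (i,j) = G $$ (i,j)"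
      by (simp add: G_def mult.commute mult.left_commute)
  qed (use G in auto)
  obtain P where P: "P \<in> carrier_mat n n" and PP: "transpose_mat P * P = 1\<^sub>m n"
    and Dd: "diagonal_mat (transpose_mat P * G * P)"
    using spectral[OF G symG] by blast
  define d where "d = (\<lambda>k. (transpose_mat P * G * P) $$ (k,k))"
  have np: "num_pos_eigenvalues G = card {k. k < n \<and> d k > 0}"
    using count_eigs[OF G P PP Dd, of "\<lambda>x. x > 0"] unfolding num_pos_eigenvalues_def d_def by simp
  have nn: "num_neg_eigenvalues G = card {k. k < n \<and> d k < 0}"
    using count_eigs[OF G P PP Dd, of "\<lambda>x. x < 0"] unfolding num_neg_eigenvalues_def d_def by simp
  have sp: "y i \<bullet> x = (\<Sum>a<n. y i $ a * x $ a)" if "x \<in> carrier_vec n" for i x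
    using that by (simp add: scalar_prod_def lessThan_atLeast0)
  have Gx: "(G *\<^sub>v x) $ a = (\<Sum>i\<in>{0..n+1}. l i * (y i \<bullet> x) * y i $ a)"
    if x: "x \<in> carrier_vec n" and a: "a < n" for x a
  proof -
    have "(G *\<^sub>v x) $ a = (\<Sum>b<n. (\<Sum>i\<in>{0..n+1}. l i * y i $ a * y i $ b) * x $ b)"
      using x a by (simp add: G_def scalar_prod_def lessThan_atLeast0)
    also have "\<dots> = (\<Sum>b<n. \<Sum>i\<in>{0..n+1}. l i * y i $ a * (y i $ b * x $ b))"
      by (simp only: sum_distrib_right, simp only: mult_ac)
    also have "\<dots> = (\<Sum>i\<in>{0..n+1}. \<Sum>b<n. l i * y i $ a * (y i $ b * x $ b))"
      by (rule sum.swap)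
    also have "\<dots> = (\<Sum>i\<in>{0..n+1}. (l i * y i $ a) * (\<Sum>b<n. y i $ b * x $ b))"
      by (simp only: sum_distrib_left)
    also have "\<dots> = (\<Sum>i\<in>{0..n+1}. l i * (y i \<bullet> x) * y i $ a)"
      by (intro sum.cong refl) (simp add: sp[OF x] mult_ac)
    finally show ?thesis .
  qed
  have quad: "x \<bullet> (G *\<^sub>v x) = (\<Sum>i\<in>{0..n+1}. l i * (y i \<bullet> x)^2)" if x: "x \<in> carrier_vec n" for x
  proof -
    have "x \<bullet> (G *\<^sub>v x) = (\<Sum>a<n. x $ a * (G *\<^sub>v x) $ a)"
      using x G by (simp add: scalar_prod_def lessThan_atLeast0)
    also have "\<dots> = (\<Sum>a<n. x $ a * (\<Sum>i\<in>{0..n+1}. l i * (y i \<bullet> x) * y i $ a))"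
      using Gx[OF x] by simp
    also have "\<dots> = (\<Sum>a<n. \<Sum>i\<in>{0..n+1}. l i * (y i \<bullet> x) * (y i $ a * x $ a))"
      by (simp only: sum_distrib_left, simp only: mult_ac)
    also have "\<dots> = (\<Sum>i\<in>{0..n+1}. \<Sum>a<n. l i * (y i \<bullet> x) * (y i $ a * x $ a))"
      by (rule sum.swap)
    also have "\<dots> = (\<Sum>i\<in>{0..n+1}. l i * (y i \<bullet> x) * (\<Sum>a<n. y i $ a * x $ a))"
      by (simp only: sum_distrib_left)
    also have "\<dots> = (\<Sum>i\<in>{0..n+1}. l i * (y i \<bullet> x)^2)"
      by (intro sum.cong refl) (simp add: sp[OF x] power2_eq_square)
    finally show ?thesis .
  qed
  have S0: "(\<Sum>i\<in>{0..n+1}. l i) = 0" using split0[of l n] bary_sum l0 by simp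
  have yS: "(\<Sum>i\<in>{1..n+1}. l i * (y i \<bullet> x)) = y 0 \<bullet> x" if x: "x \<in> carrier_vec n" for x
  proof -
    have "(\<Sum>i\<in>{1..n+1}. l i * (y i \<bullet> x)) = (\<Sum>i\<in>{1..n+1}. \<Sum>a<n. l i * y i $ a * x $ a)"
      by (intro sum.cong refl) (simp add: sp[OF x] sum_distrib_left mult_ac)
    also have "\<dots> = (\<Sum>a<n. \<Sum>i\<in>{1..n+1}. l i * y i $ a * x $ a)"
      by (rule sum.swap)
    also have "\<dots> = (\<Sum>a<n. (\<Sum>i\<in>{1..n+1}. l i * y i $ a) * x $ a)"
      by (simp only: sum_distrib_right)
    also have "\<dots> = (\<Sum>a<n. y 0 $ a * x $ a)" using bary_comb by simp
    also have "\<dots> = y 0 \<bullet> x" by (simp add: sp[OF x])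
    finally show ?thesis .
  qed
  have S1: "(\<Sum>i\<in>{0..n+1}. l i * (y i \<bullet> x)) = 0" if x: "x \<in> carrier_vec n" for x
    using split0[of "\<lambda>i. l i * (y i \<bullet> x)" n] yS[OF x] l0 by simp
  have shiftq: "(\<Sum>i\<in>{0..n+1}. l i * (y i \<bullet> x - c)^2) = (\<Sum>i\<in>{0..n+1}. l i * (y i \<bullet> x)^2)"
    if x: "x \<in> carrier_vec n" for x c
  proof -
    have "(\<Sum>i\<in>{0..n+1}. l i * (y i \<bullet> x - c)^2)
       = (\<Sum>i\<in>{0..n+1}. l i * (y i \<bullet> x)^2) - 2 * c * (\<Sum>i\<in>{0..n+1}. l i * (y i \<bullet> x)) + c^2 * (\<Sum>i\<in>{0..n+1}. l i)"
      by (simp add: power2_eq_square algebra_simps sum.distrib sum_subtractf sum_distrib_left)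
    then show ?thesis using S1[OF x] S0 by simp
  qed
  have ydiff: "(y i - y j) \<bullet> x = y i \<bullet> x - y j \<bullet> x" if "i \<in> {0..n+1}" "j \<in> {0..n+1}" "x \<in> carrier_vec n" for i j x
    using minus_scalar_prod_distrib[OF yc[OF that(1)] yc[OF that(2)] that(3)] .
  define Ip where "Ip = {i\<in>{0..n+1}. l i > 0}"
  obtain j where j: "j \<in> {1..n+1}" "l j > 0"
  proof (rule ccontr)
    assume "\<not> thesis"
    with that have "\<forall>i\<in>{1..n+1}. l i \<le> 0" by force
    then have "(\<Sum>i\<in>{1..n+1}. l i) \<le> 0" by (intro sum_nonpos) blast
    then show False using bary_sum by simp
  qed
  have jI: "j \<in> {0..n+1}" using j by auto
  have jIp: "j \<in> Ip" using j unfolding Ip_def by auto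
  define Fp where "Fp = (\<lambda>i. y i - y j) ` (Ip - {j})"
  have Fp: "finite Fp" "Fp \<subseteq> carrier_vec n" unfolding Fp_def Ip_def using yc jI by auto
  have "card Fp \<le> card (Ip - {j})" unfolding Fp_def by (rule card_image_le) (simp add: Ip_def)
  also have "\<dots> = card Ip - 1" using jIp by (simp add: Ip_def)
  finally have cFp: "card Fp \<le> card Ip - 1" .
  have Hp: "\<forall>x\<in>carrier_vec n. (\<forall>f\<in>Fp. f \<bullet> x = 0) \<longrightarrow> 1 * (x \<bullet> (G *\<^sub>v x)) \<le> 0"
  proof (intro ballI impI)
    fix x :: "real vec" assume x: "x \<in> carrier_vec n" and o: "\<forall>f\<in>Fp. f \<bullet> x = 0"
    have eqj: "y i \<bullet> x = y j \<bullet> x" if i: "i \<in> Ip" for i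
    proof (cases "i = j")
      case False
      then have "(y i - y j) \<bullet> x = 0" using o i unfolding Fp_def by auto
      then show ?thesis using ydiff[of i j x] i jI x unfolding Ip_def by auto
    qed simp
    have "x \<bullet> (G *\<^sub>v x) = (\<Sum>i\<in>{0..n+1}. l i * (y i \<bullet> x - y j \<bullet> x)^2)"
      using quad[OF x] shiftq[OF x] by simp
    also have "\<dots> \<le> 0"
    proof (rule sum_nonpos)
      fix i assume i: "i \<in> {0..n+1}"
      show "l i * (y i \<bullet> x - y j \<bullet> x)^2 \<le> 0"
      proof (cases "l i > 0")
        case True then have "i \<in> Ip" using i unfolding Ip_def by auto
        then show ?thesis using eqj by simp
      next
        case False then show ?thesis by (simp add: mult_nonpos_nonneg)
      qed
    qed
    finally show "1 * (x \<bullet> (G *\<^sub>v x)) \<le> 0" by simp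
  qed
  have pb: "card {k. k < n \<and> d k > 0} \<le> card Ip - 1"
    using sylv_sign[OF G P PP Dd Fp Hp] cFp unfolding d_def by simp
  define Im where "Im = {i\<in>{0..n+1}. l i < 0}"
  have i0I: "0 \<in> {0..n+1}" by simp
  have Im0: "0 \<in> Im" using l0 unfolding Im_def by auto
  define Fm where "Fm = (\<lambda>i. y i - y 0) ` (Im - {0})"
  have Fm: "finite Fm" "Fm \<subseteq> carrier_vec n" unfolding Fm_def Im_def using yc by auto
  have "card Fm \<le> card (Im - {0})" unfolding Fm_def by (rule card_image_le) (simp add: Im_def)
  also have "\<dots> = card Im - 1" using Im0 by (simp add: Im_def)
  finally have cFm: "card Fm \<le> card Im - 1" .
  have Hm: "\<forall>x\<in>carrier_vec n. (\<forall>f\<in>Fm. f \<bullet> x = 0) \<longrightarrow> -1 * (x \<bullet> (G *\<^sub>v x)) \<le> 0"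
  proof (intro ballI impI)
    fix x :: "real vec" assume x: "x \<in> carrier_vec n" and o: "\<forall>f\<in>Fm. f \<bullet> x = 0"
    have eqj: "y i \<bullet> x = y 0 \<bullet> x" if i: "i \<in> Im" for i
    proof (cases "i = 0")
      case False
      then have "(y i - y 0) \<bullet> x = 0" using o i unfolding Fm_def by auto
      then show ?thesis using ydiff[of i 0 x] i x unfolding Im_def by auto
    qed simp
    have "x \<bullet> (G *\<^sub>v x) = (\<Sum>i\<in>{0..n+1}. l i * (y i \<bullet> x - y 0 \<bullet> x)^2)"
      using quad[OF x] shiftq[OF x] by simp
    also have "\<dots> \<ge> 0"
    proof (rule sum_nonneg)
      fix i assume i: "i \<in> {0..n+1}"
      show "l i * (y i \<bullet> x - y 0 \<bullet> x)^2 \<ge> 0"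
      proof (cases "l i < 0")
        case True then have "i \<in> Im" using i unfolding Im_def by auto
        then show ?thesis using eqj by simp
      next
        case False then show ?thesis by simp
      qed
    qed
    finally show "-1 * (x \<bullet> (G *\<^sub>v x)) \<le> 0" by simp
  qed
  have mb: "card {k. k < n \<and> d k < 0} \<le> card Im - 1"
    using sylv_sign[OF G P PP Dd Fm Hm] cFm unfolding d_def by simp
  define I0 where "I0 = {i\<in>{0..n+1}. l i = 0}"
  define F0 where "F0 = (\<lambda>i. y i - y 0) ` I0"
  have F0: "finite F0" "F0 \<subseteq> carrier_vec n" unfolding F0_def I0_def using yc by auto
  have cF0: "card F0 \<le> card I0" unfolding F0_def by (rule card_image_le) (simp add: I0_def)
  have H0: "\<forall>x\<in>carrier_vec n. G *\<^sub>v x = 0\<^sub>v n \<and> (\<forall>f\<in>F0. f \<bullet> x = 0) \<longrightarrow> x = 0\<^sub>v n"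
  proof (intro ballI impI)
    fix x :: "real vec" assume x: "x \<in> carrier_vec n" and h: "G *\<^sub>v x = 0\<^sub>v n \<and> (\<forall>f\<in>F0. f \<bullet> x = 0)"
    define c where "c = (\<lambda>i. l i * (y i \<bullet> x - y 0 \<bullet> x))"
    have "(\<Sum>i\<in>{1..n+1}. c i) = (\<Sum>i\<in>{1..n+1}. l i * (y i \<bullet> x)) - (\<Sum>i\<in>{1..n+1}. l i) * (y 0 \<bullet> x)"
      unfolding c_def by (simp only: right_diff_distrib sum_subtractf sum_distrib_right)
    then have c1: "(\<Sum>i\<in>{1..n+1}. c i) = 0" using yS[OF x] bary_sum by simp
    have c2: "(\<Sum>i\<in>{1..n+1}. c i * y i $ a) = 0" if a: "a < n" for a
    proof -
      have "(\<Sum>i\<in>{1..n+1}. c i * y i $ a)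
          = (\<Sum>i\<in>{1..n+1}. l i * (y i \<bullet> x) * y i $ a) - (y 0 \<bullet> x) * (\<Sum>i\<in>{1..n+1}. l i * y i $ a)"
        unfolding c_def by (simp only: right_diff_distrib left_diff_distrib sum_subtractf sum_distrib_left, simp only: mult_ac)
      also have "(\<Sum>i\<in>{1..n+1}. l i * y i $ a) = y 0 $ a" using bary_comb a by simp
      also have "(\<Sum>i\<in>{1..n+1}. l i * (y i \<bullet> x) * y i $ a) = (y 0 \<bullet> x) * y 0 $ a"
      proof -
        have "(G *\<^sub>v x) $ a = 0" using h a by simp
        then have "(\<Sum>i\<in>{0..n+1}. l i * (y i \<bullet> x) * y i $ a) = 0" using Gx[OF x a] by simp
        then show ?thesis using split0[of "\<lambda>i. l i * (y i \<bullet> x) * y i $ a" n] l0 by simp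
      qed
      finally show ?thesis by simp
    qed
    have call: "\<forall>i\<in>{1..n+1}. c i = 0" using aff c1 c2 unfolding affinely_independent_def by blast
    have "\<forall>i\<in>{1..n+1}. y i \<bullet> x = y 0 \<bullet> x"
    proof
      fix i assume i: "i \<in> {1..n+1}"
      then have iI: "i \<in> {0..n+1}" by auto
      show "y i \<bullet> x = y 0 \<bullet> x"
      proof (cases "l i = 0")
        case True
        then have "y i - y 0 \<in> F0" unfolding F0_def I0_def using iI by auto
        then have "(y i - y 0) \<bullet> x = 0" using h by blast
        then show ?thesis using ydiff[OF iI i0I x] by simp
      next
        case False
        have "c i = 0" using call i by blast
        then have "l i * (y i \<bullet> x - y 0 \<bullet> x) = 0" by (simp only: c_def)
        then show ?thesis using False by simp
      qed
    qed
    then show "x = 0\<^sub>v n" by (rule dual_aff[OF aff yc1 x])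
  qed
  have zb: "card {k. k < n \<and> d k = 0} \<le> card I0"
    using sylv_zero[OF G P PP Dd F0 H0] cF0 unfolding d_def by simp
  have part1: "card {k. k < n \<and> d k > 0} + card {k. k < n \<and> d k < 0} + card {k. k < n \<and> d k = 0} = n"
    using card3[of "{..<n}" d] by simp
  have part2: "card Ip + card Im + card I0 = n + 2"
    using card3[of "{0..n+1}" l] unfolding Ip_def Im_def I0_def by simp
  have "finite Ip" "finite Im" unfolding Ip_def Im_def by simp_all
  then have c1: "card Ip \<ge> 1" "card Im \<ge> 1" using jIp Im0 card_gt_0_iff
    by (metis One_nat_def Suc_leI empty_iff)+
  have "card {k. k < n \<and> d k > 0} = card Ip - 1 \<and> card {k. k < n \<and> d k < 0} = card Im - 1"
    using pb mb zb part1 part2 c1 by linarith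
  then show ?thesis using np nn unfolding G_def Ip_def Im_def by simp
qed

end
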